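(* Let $n>2$, $1\le k<n$, and let the triple $(\kappa,M,p)$ satisfy Assumption (A) (see context). Then there is a multivariate polynomial $g_{\kappa,M,p}:\mathbb{R}^n\times\mathbb{R}^{n\times k}\to\mathbb{R}$, which does not depend on the hypothesis $(R,r)$, such that for every $X\in\mathfrak{X}_0$ $$N(\hat\Omega_{\kappa,M,p,X})=\{y\in\mathbb{R}^n: g_{\kappa,M,p}(y,X)=0\}.$$ In particular $N(\hat\Omega_{\kappa,M,p,X})$ is an algebraic subset of $\mathbb{R}^n$.
   Context: Let $n>2$ and $1\le k<n$ be integers and $\mathfrak{X}_0=\{X\in\mathbb{R}^{n\times k}:\operatorname{rank}(X)=k\}$. For $X\in\mathfrak{X}_0$, $y\in\mathbb{R}^n$: $\hat\beta_X(y)=(X'X)^{-1}X'y$, $\hat u_X(y)=y-X\hat\beta_X(y)$. A hypothesis is $(R,r)$ with $R\in\mathbb{R}^{q\times k}$, $\operatorname{rank}(R)=q\ge1$, $r\in\mathbb{R}^q$. Construction of the prewhitened estimator $\hat\Omega_{\kappa,M,p,X}$ at $y$ (given kernel $\kappa:\mathbb{R}\to\mathbb{R}$, bandwidth $M$, integer order $p$): let $\hat V(y)=X'\operatorname{diag}(\hat u_X(y))\in\mathbb{R}^{k\times n}$ with columns $\hat V_{\cdot j}(y)$; $\hat V_p(y)=(\hat V_{\cdot(p+1)}(y),\dots,\hat V_{\cdot n}(y))\in\mathbb{R}^{k\times(n-p)}$; $\hat V_1(y)\in\mathbb{R}^{kp\times(n-p)}$ has $j$-th column $(\hat V_{\cdot(j+p-1)}(y)',\dots,\hat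 V_{\cdot(j+1)}(y)',\hat V_{\cdot j}(y)')'$. If $\hat V_1\hat V_1'$ is invertible, $\hat A^{(p)}(y)=(\hat A_1(y),\dots,\hat A_p(y))=\hat V_p(y)\hat V_1(y)'(\hat V_1(y)\hat V_1(y)')^{-1}$ ($\hat A_l\in\mathbb{R}^{k\times k}$) and $\hat Z(y)=\hat V_p(y)-\hat A^{(p)}(y)\hat V_1(y)\in\mathbb{R}^{k\times(n-p)}$. Put $\check\Gamma_i(y)=(n-p)^{-1}\sum_{j=i+1}^{n-p}\hat Z_{\cdot j}(y)\hat Z_{\cdot(j-i)}(y)'$ for $0\le i\le n-p-1$, $\check\Gamma_{-i}=\check\Gamma_i'$, and $\check\Psi(y)=\sum_{i=-(n-p-1)}^{n-p-1}\kappa(i/M(y))\check\Gamma_i(y)$, where if $M(y)=0$ the weight $\kappa(i/M(y))$ is read as $1$ for $i=0$ and $0$ for $i\neq0$. If $I_k-\sum_{l=1}^p\hat A_l(y)$ is invertible, with $F=(I_k-\sum_l\hat A_l(y))^{-1}$ set $\hat\Psi(y)=F\check\Psi(y)F'$ and $\hat\Omega_{\kappa,M,p,X}(y)=nR(X'X)^{-1}\hat\Psi(y)(X'X)^{-1}R'$. The estimator is undefined at $y$ if $\hat V_1(y)\hat V_1(y)'$ is singular, or $I_k-\sum_l\hat A_l(y)$ is singular, or $M(y)$ is undefined. $N(\hat\Omega_{\kappa,M,p,X})$ is the set of $y$ where it is undefined. Bandwidths (computed from $\hat Z(y)$; undefined whenever $\hat Z(y)$ is undefined or a denominator below vanishes;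 all tuning constants are functionally independent of $y$ and $X$). A weights vector is $\omega\in\mathbb{R}^k\setminus\{0\}$ with nonnegative entries. $\mathbb{M}_{AM}$: with $\hat\rho_i=\sum_{j=2}^{n-p}\hat Z_{ij}\hat Z_{i(j-1)}/\sum_{j=1}^{n-p-1}\hat Z_{ij}^2$, $\hat\sigma_i^2=(n-p-1)^{-1}\sum_{j=2}^{n-p}(\hat Z_{ij}-\hat\rho_i\hat Z_{i(j-1)})^2$ ($i=1,\dots,k$), $\hat\alpha_1=\sum_i\omega_i\frac{4\hat\rho_i^2\hat\sigma_i^4}{(1-\hat\rho_i)^6(1+\hat\rho_i)^2}\big/\sum_i\omega_i\frac{\hat\sigma_i^4}{(1-\hat\rho_i)^4}$, $\hat\alpha_2=\sum_i\omega_i\frac{4\hat\rho_i^2\hat\sigma_i^4}{(1-\hat\rho_i)^8}\big/\sum_i\omega_i\frac{\hat\sigma_i^4}{(1-\hat\rho_i)^4}$, $M(y)=c_1(\hat\alpha_j(y)n)^{c_2}$ for fixed $c_1,c_2>0$, $j\in\{1,2\}$, weights vector $\omega$. $\mathbb{M}_{NW}$: with a weights vector $\omega$, numbers $w(i)\ge0$ ($|i|\le n-p-1$), $w(0)=1$, $\bar\sigma_i(y)=\omega'\check\Gamma_{|i|}(y)\omega$, $M(y)=\bar c_2\big(\big[\sum_{i}|i|^{\bar c_1}w(i)\bar\sigma_i(y)/\sum_i w(i)\bar\sigma_i(y)\big]^2n\big)^{\bar c_3}$ (sums over $|i|\le n-p-1$), $\bar c_1$ a positive integer, $\bar c_2,\bar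 c_3>0$. $\mathbb{M}_{KV}$: constant bandwidths $M>0$. Assumption (A) on $(\kappa,M,p)$: (i) $\kappa$ is even, continuous, $\kappa(0)=1$, $\kappa(x)\to0$ as $x\to\infty$, and for every real $s>0$ and positive integer $J$ the $J\times J$ matrix $(\kappa((i-j)/s))_{i,j}$ is positive definite; (ii) $M\in\mathbb{M}_{AM}\cup\mathbb{M}_{NW}\cup\mathbb{M}_{KV}$; (iii) $p$ is an integer with $1\le p\le n/(k+1)$. *)

theory Defs
  imports Complex_Main "Jordan_Normal_Form.Gauss_Jordan_Elimination" "Jordan_Normal_Form.DL_Rank"
begin

(* Conventions: matrices are JNF matrices (real mat) with explicit dimensions,
   vectors are real vec. All indices are 0-based; index j (0-based) corresponds
   to index j+1 of the paper. *)

inductive mvpoly :: "nat \<Rightarrow> nat \<Rightarrow> (real vec \<Rightarrow> real mat \<Rightarrow> real) \<Rightarrow> bool"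
  for n k :: nat where
  const: "mvpoly n k (\<lambda>y X. c)"
| yvar: "i < n \<Longrightarrow> mvpoly n k (\<lambda>y X. y $ i)"
| xvar: "i < n \<Longrightarrow> j < k \<Longrightarrow> mvpoly n k (\<lambda>y X. X $$ (i, j))"
| add: "mvpoly n k f \<Longrightarrow> mvpoly n k g \<Longrightarrow> mvpoly n k (\<lambda>y X. f y X + g y X)"
| mult: "mvpoly n k f \<Longrightarrow> mvpoly n k g \<Longrightarrow> mvpoly n k (\<lambda>y X. f y X * g y X)"

definition design_set :: "nat \<Rightarrow> nat \<Rightarrow> real mat set" where
  "design_set n k = {X. X \<in> carrier_mat n k \<and> vec_space.rank n X = k}"

definition beta_hat :: "real mat \<Rightarrow> real vec \<Rightarrow> real vec" where
  "beta_hat X y = the (mat_inverse (transpose_mat X * X)) *\<^sub>v (transpose_mat X *\<^sub>v y)"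

definition u_hat :: "real mat \<Rightarrow> real vec \<Rightarrow> real vec" where
  "u_hat X y = y - X *\<^sub>v beta_hat X y"

definition V_hat :: "real mat \<Rightarrow> real vec \<Rightarrow> real mat" where
  "V_hat X y = transpose_mat X * mat_diag (dim_row X) (\<lambda>i. u_hat X y $ i)"

definition V_p :: "nat \<Rightarrow> real mat \<Rightarrow> real mat" where
  "V_p p V = mat (dim_row V) (dim_col V - p) (\<lambda>(i, j). V $$ (i, j + p))"

(* V_1: kp x (n-p); (0-based) column j is (V_{j+p-1}', ..., V_{j}')' (0-based columns of V),
   i.e. row block l (0-based) holds column j+p-1-l of V *)
definition V_1 :: "nat \<Rightarrow> real mat \<Rightarrow> real mat" where
  "V_1 p V = mat (dim_row V * p) (dim_col V - p)
     (\<lambda>(r, j). V $$ (r mod (dim_row V), j + p - 1 - r div (dim_row V)))"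

definition A_hat :: "nat \<Rightarrow> real mat \<Rightarrow> real mat option" where
  "A_hat p V = (case mat_inverse (V_1 p V * transpose_mat (V_1 p V)) of
       None \<Rightarrow> None
     | Some B \<Rightarrow> Some (V_p p V * transpose_mat (V_1 p V) * B))"

definition A_sum :: "nat \<Rightarrow> nat \<Rightarrow> real mat \<Rightarrow> real mat" where
  "A_sum k p A = mat k k (\<lambda>(i, j). \<Sum>l<p. A $$ (i, l * k + j))"

definition Z_hat :: "nat \<Rightarrow> real mat \<Rightarrow> real mat option" where
  "Z_hat p V = (case A_hat p V of None \<Rightarrow> None
                 | Some A \<Rightarrow> Some (V_p p V - A * V_1 p V))"

definition Gam :: "real mat \<Rightarrow> nat \<Rightarrow> real mat" where
  "Gam Z i = mat (dim_row Z) (dim_row Z)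
     (\<lambda>(a, b). (\<Sum>j\<in>{i..<dim_col Z}. Z $$ (a, j) * Z $$ (b, j - i)) / real (dim_col Z))"

definition Gam_int :: "real mat \<Rightarrow> int \<Rightarrow> real mat" where
  "Gam_int Z i = (if i \<ge> 0 then Gam Z (nat i) else transpose_mat (Gam Z (nat (- i))))"

definition kweight :: "(real \<Rightarrow> real) \<Rightarrow> real \<Rightarrow> int \<Rightarrow> real" where
  "kweight \<kappa> M i = (if M = 0 then (if i = 0 then 1 else 0) else \<kappa> (real_of_int i / M))"

definition Psi_check :: "(real \<Rightarrow> real) \<Rightarrow> real \<Rightarrow> real mat \<Rightarrow> real mat" where
  "Psi_check \<kappa> M Z = mat (dim_row Z) (dim_row Z)
     (\<lambda>(a, b). \<Sum>i\<in>{- (int (dim_col Z) - 1) .. int (dim_col Z) - 1}.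
                  kweight \<kappa> M i * Gam_int Z i $$ (a, b))"

(* AM c1 c2 j omega : Andrews-type (M_AM);
   NW omega w cbar1 cbar2 cbar3 : Newey-West-type (M_NW);
   KV M : constant bandwidth (M_KV) *)
datatype bandwidth =
    AM real real nat "real vec"
  | NW "real vec" "int \<Rightarrow> real" nat real real
  | KV real

definition weights_vector :: "nat \<Rightarrow> real vec \<Rightarrow> bool" where
  "weights_vector k \<omega> \<longleftrightarrow> \<omega> \<in> carrier_vec k \<and> \<omega> \<noteq> 0\<^sub>v k \<and> (\<forall>i<k. \<omega> $ i \<ge> 0)"

definition bandwidth_ok :: "nat \<Rightarrow> nat \<Rightarrow> nat \<Rightarrow> bandwidth \<Rightarrow> bool" where
  "bandwidth_ok n k p b = (case b of
      AM c1 c2 j \<omega> \<Rightarrow> c1 > 0 \<and> c2 > 0 \<and> j \<in> {1, 2} \<and> weights_vector k \<omega>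
    | NW \<omega> w c1 c2 c3 \<Rightarrow> weights_vector k \<omega> \<and> w 0 = 1
          \<and> (\<forall>i. \<bar>i\<bar> \<le> int n - int p - 1 \<longrightarrow> w i \<ge> 0)
          \<and> c1 \<ge> 1 \<and> c2 > 0 \<and> c3 > 0
    | KV M \<Rightarrow> M > 0)"

definition rho_hat :: "real mat \<Rightarrow> nat \<Rightarrow> real" where
  "rho_hat Z i = (\<Sum>j\<in>{1..<dim_col Z}. Z $$ (i, j) * Z $$ (i, j - 1))
                 / (\<Sum>j<dim_col Z - 1. (Z $$ (i, j))\<^sup>2)"

definition sigma2_hat :: "real mat \<Rightarrow> nat \<Rightarrow> real" where
  "sigma2_hat Z i = (\<Sum>j\<in>{1..<dim_col Z}. (Z $$ (i, j) - rho_hat Z i * Z $$ (i, j - 1))\<^sup>2)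
                    / real (dim_col Z - 1)"

definition bandwidth_val :: "bandwidth \<Rightarrow> nat \<Rightarrow> real mat \<Rightarrow> real option" where
  "bandwidth_val b n Z = (case b of
      AM c1 c2 j \<omega> \<Rightarrow>
        (let k = dim_row Z; \<rho> = rho_hat Z; \<sigma>2 = sigma2_hat Z;
             den = (\<Sum>i<k. \<omega> $ i * (\<sigma>2 i)\<^sup>2 / (1 - \<rho> i) ^ 4);
             num1 = (\<Sum>i<k. \<omega> $ i * (4 * (\<rho> i)\<^sup>2 * (\<sigma>2 i)\<^sup>2)
                                / ((1 - \<rho> i) ^ 6 * (1 + \<rho> i)\<^sup>2));
             num2 = (\<Sum>i<k. \<omega> $ i * (4 * (\<rho> i)\<^sup>2 * (\<sigma>2 i)\<^sup>2) / (1 - \<rho> i) ^ 8);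
             \<alpha> = (if j = 1 then num1 / den else num2 / den)
         in if (\<forall>i<k. (\<Sum>l<dim_col Z - 1. (Z $$ (i, l))\<^sup>2) \<noteq> 0 \<and> \<rho> i \<noteq> 1
                       \<and> (j = 1 \<longrightarrow> \<rho> i \<noteq> -1)) \<and> den \<noteq> 0
            then Some (c1 * (\<alpha> * real n) powr c2) else None)
    | NW \<omega> w c1 c2 c3 \<Rightarrow>
        (let m = int (dim_col Z);
             \<sigma>b = (\<lambda>i::int. \<omega> \<bullet> (Gam Z (nat \<bar>i\<bar>) *\<^sub>v \<omega>));
             den = (\<Sum>i\<in>{-(m - 1)..m - 1}. w i * \<sigma>b i);
             num = (\<Sum>i\<in>{-(m - 1)..m - 1}. real (nat \<bar>i\<bar>) ^ c1 * w i * \<sigma>b i)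
         in if den \<noteq> 0 then Some (c2 * ((num / den)\<^sup>2 * real n) powr c3) else None)
    | KV M \<Rightarrow> Some M)"

definition Omega_hat :: "(real \<Rightarrow> real) \<Rightarrow> bandwidth \<Rightarrow> nat \<Rightarrow> real mat \<Rightarrow> real mat
                          \<Rightarrow> real vec \<Rightarrow> real mat option" where
  "Omega_hat \<kappa> b p X R y =
    (let n = dim_row X; k = dim_col X; V = V_hat X y;
         XXi = the (mat_inverse (transpose_mat X * X)) in
     case A_hat p V of None \<Rightarrow> None
     | Some A \<Rightarrow>
       (let Z = V_p p V - A * V_1 p V in
        case mat_inverse (1\<^sub>m k - A_sum k p A) of None \<Rightarrow> None
        | Some F \<Rightarrow>
          (case bandwidth_val b n Z of None \<Rightarrow> None
           | Some M \<Rightarrow>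
              (let Psi = F * Psi_check \<kappa> M Z * transpose_mat F in
               Some (real n \<cdot>\<^sub>m (R * XXi * Psi * XXi * transpose_mat R))))))"

definition N_set :: "(real \<Rightarrow> real) \<Rightarrow> bandwidth \<Rightarrow> nat \<Rightarrow> real mat \<Rightarrow> real mat \<Rightarrow> real vec set" where
  "N_set \<kappa> b p X R = {y \<in> carrier_vec (dim_row X). Omega_hat \<kappa> b p X R y = None}"

definition pos_def_mat :: "real mat \<Rightarrow> bool" where
  "pos_def_mat A \<longleftrightarrow> (\<exists>J. A \<in> carrier_mat J J \<and>
      (\<forall>x \<in> carrier_vec J. x \<noteq> 0\<^sub>v J \<longrightarrow> x \<bullet> (A *\<^sub>v x) > 0))"

definition kernel_ok :: "(real \<Rightarrow> real) \<Rightarrow> bool" where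
  "kernel_ok \<kappa> \<longleftrightarrow> (\<forall>x. \<kappa> (- x) = \<kappa> x) \<and> continuous_on UNIV \<kappa> \<and> \<kappa> 0 = 1
     \<and> (\<kappa> \<longlongrightarrow> 0) at_top
     \<and> (\<forall>s::real. \<forall>J::nat. s > 0 \<and> J \<ge> 1 \<longrightarrow>
          pos_def_mat (mat J J (\<lambda>(i, j). \<kappa> ((real i - real j) / s))))"

definition assumption_A :: "nat \<Rightarrow> nat \<Rightarrow> (real \<Rightarrow> real) \<Rightarrow> bandwidth \<Rightarrow> nat \<Rightarrow> bool" where
  "assumption_A n k \<kappa> b p \<longleftrightarrow> kernel_ok \<kappa> \<and> bandwidth_ok n k p b
     \<and> 1 \<le> p \<and> real p \<le> real n / real (k + 1)"

end

theory Submission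
  imports Defs
begin


lemma mvpoly_ext: "mvpoly n k g \<Longrightarrow> (\<And>y X. f y X = g y X) \<Longrightarrow> mvpoly n k f"
proof -
  assume "mvpoly n k g" "\<And>y X. f y X = g y X"
  then have "f = g" by (intro ext)
  with \<open>mvpoly n k g\<close> show ?thesis by simp
qed

lemma mvpoly_const: "mvpoly n k (\<lambda>y X. c)" by (rule mvpoly.const)

lemma mvpoly_add: "mvpoly n k f \<Longrightarrow> mvpoly n k g \<Longrightarrow> mvpoly n k (\<lambda>y X. f y X + g y X)"
  by (rule mvpoly.add)
lemma mvpoly_mult: "mvpoly n k f \<Longrightarrow> mvpoly n k g \<Longrightarrow> mvpoly n k (\<lambda>y X. f y X * g y X)"
  by (rule mvpoly.mult)
lemma mvpoly_neg: "mvpoly n k f \<Longrightarrow> mvpoly n k (\<lambda>y X. - f y X)"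
  by (rule mvpoly_ext[OF mvpoly_mult[OF mvpoly_const[of n k "-1"]]]) auto
lemma mvpoly_diff: "mvpoly n k f \<Longrightarrow> mvpoly n k g \<Longrightarrow> mvpoly n k (\<lambda>y X. f y X - g y X)"
  by (rule mvpoly_ext[OF mvpoly_add[OF _ mvpoly_neg]]) auto
lemma mvpoly_power: "mvpoly n k f \<Longrightarrow> mvpoly n k (\<lambda>y X. f y X ^ e)"
proof (induction e)
  case 0 then show ?case by (simp add: mvpoly_const)
next
  case (Suc e) then show ?case by (simp add: mvpoly_mult)
qed
lemma mvpoly_if: "mvpoly n k f \<Longrightarrow> mvpoly n k g \<Longrightarrow> mvpoly n k (\<lambda>y X. if P then f y X else g y X)"
  by (cases P) auto
lemma mvpoly_sum: "(\<And>i. i \<in> A \<Longrightarrow> mvpoly n k (\<lambda>y X. f i y X)) \<Longrightarrow> mvpoly n k (\<lambda>y X. \<Sum>i\<in>A. f i y X)"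
proof (induction A rule: infinite_finite_induct)
  case (infinite A) then show ?case by (simp add: mvpoly_const)
next
  case empty then show ?case by (simp add: mvpoly_const)
next
  case (insert x F) then show ?case by (simp add: mvpoly_add)
qed
lemma mvpoly_prod: "(\<And>i. i \<in> A \<Longrightarrow> mvpoly n k (\<lambda>y X. f i y X)) \<Longrightarrow> mvpoly n k (\<lambda>y X. \<Prod>i\<in>A. f i y X)"
proof (induction A rule: infinite_finite_induct)
  case (infinite A) then show ?case by (simp add: mvpoly_const)
next
  case empty then show ?case by (simp add: mvpoly_const)
next
  case (insert x F) then show ?case by (simp add: mvpoly_mult)
qed
lemma mvpoly_divc: "mvpoly n k f \<Longrightarrow> mvpoly n k (\<lambda>y X. f y X / c)"
  by (rule mvpoly_ext[OF mvpoly_mult[OF _ mvpoly_const[of n k "1/c"]]]) auto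

definition pmat :: "nat \<Rightarrow> nat \<Rightarrow> nat \<Rightarrow> nat \<Rightarrow> (real vec \<Rightarrow> real mat \<Rightarrow> real mat) \<Rightarrow> bool" where
  "pmat n k r s F \<longleftrightarrow> (\<forall>y X. F y X \<in> carrier_mat r s) \<and> (\<forall>i<r. \<forall>j<s. mvpoly n k (\<lambda>y X. F y X $$ (i, j)))"

lemma pmat_carrier: "pmat n k r s F \<Longrightarrow> F y X \<in> carrier_mat r s"
  unfolding pmat_def by auto
lemma pmat_entry: "pmat n k r s F \<Longrightarrow> i < r \<Longrightarrow> j < s \<Longrightarrow> mvpoly n k (\<lambda>y X. F y X $$ (i, j))"
  unfolding pmat_def by auto

lemma pmat_mat: "(\<And>i j. i < r \<Longrightarrow> j < s \<Longrightarrow> mvpoly n k (\<lambda>y X. f i j y X)) \<Longrightarrow>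
   pmat n k r s (\<lambda>y X. mat r s (\<lambda>(i, j). f i j y X))"
  unfolding pmat_def by (auto elim!: mvpoly_ext)

lemma pmat_ext: "pmat n k r s G \<Longrightarrow> (\<And>y X. F y X = G y X) \<Longrightarrow> pmat n k r s F"
proof -
  assume "pmat n k r s G" "\<And>y X. F y X = G y X"
  then have "F = G" by (intro ext)
  with \<open>pmat n k r s G\<close> show ?thesis by simp
qed

lemma pmat_mult: assumes F: "pmat n k r s F" and G: "pmat n k s t G"
  shows "pmat n k r t (\<lambda>y X. F y X * G y X)"
  unfolding pmat_def
proof (intro conjI allI impI)
  fix y X show "F y X * G y X \<in> carrier_mat r t" using pmat_carrier[OF F, of y X] pmat_carrier[OF G, of y X] by (metis mult_carrier_mat)
next
  fix i j assume ij: "i < r" "j < t"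
  show "mvpoly n k (\<lambda>y X. (F y X * G y X) $$ (i, j))"
  proof (rule mvpoly_ext)
    show "mvpoly n k (\<lambda>y X. \<Sum>l\<in>{0..<s}. F y X $$ (i, l) * G y X $$ (l, j))"
      using ij by (intro mvpoly_sum mvpoly_mult pmat_entry[OF F] pmat_entry[OF G]) auto
  next
    fix y X show "(F y X * G y X) $$ (i, j) = (\<Sum>l\<in>{0..<s}. F y X $$ (i, l) * G y X $$ (l, j))"
      using pmat_carrier[OF F, of y X] pmat_carrier[OF G, of y X] ij
      by (auto simp: scalar_prod_def intro!: sum.cong)
  qed
qed

lemma pmat_add: assumes F: "pmat n k r s F" and G: "pmat n k r s G"
  shows "pmat n k r s (\<lambda>y X. F y X + G y X)"
  unfolding pmat_def
proof (intro conjI allI impI)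
  fix y X show "F y X + G y X \<in> carrier_mat r s" using pmat_carrier[OF F, of y X] pmat_carrier[OF G, of y X] by (metis add_carrier_mat)
next
  fix i j assume ij: "i < r" "j < s"
  show "mvpoly n k (\<lambda>y X. (F y X + G y X) $$ (i, j))"
  proof (rule mvpoly_ext[OF mvpoly_add[OF pmat_entry[OF F ij] pmat_entry[OF G ij]]])
    fix y X show "(F y X + G y X) $$ (i, j) = F y X $$ (i, j) + G y X $$ (i, j)"
      using pmat_carrier[OF F, of y X] pmat_carrier[OF G, of y X] ij by auto
  qed
qed

lemma pmat_minus: assumes F: "pmat n k r s F" and G: "pmat n k r s G"
  shows "pmat n k r s (\<lambda>y X. F y X - G y X)"
  unfolding pmat_def
proof (intro conjI allI impI)
  fix y X show "F y X - G y X \<in> carrier_mat r s" using pmat_carrier[OF F, of y X] pmat_carrier[OF G, of y X] by (metis minus_carrier_mat)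
next
  fix i j assume ij: "i < r" "j < s"
  show "mvpoly n k (\<lambda>y X. (F y X - G y X) $$ (i, j))"
  proof (rule mvpoly_ext[OF mvpoly_diff[OF pmat_entry[OF F ij] pmat_entry[OF G ij]]])
    fix y X show "(F y X - G y X) $$ (i, j) = F y X $$ (i, j) - G y X $$ (i, j)"
      using pmat_carrier[OF F, of y X] pmat_carrier[OF G, of y X] ij by auto
  qed
qed

lemma pmat_smult: assumes f: "mvpoly n k f" and F: "pmat n k r s F"
  shows "pmat n k r s (\<lambda>y X. f y X \<cdot>\<^sub>m F y X)"
  unfolding pmat_def
proof (intro conjI allI impI)
  fix y X show "f y X \<cdot>\<^sub>m F y X \<in> carrier_mat r s" using pmat_carrier[OF F] by auto
next
  fix i j assume ij: "i < r" "j < s"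
  show "mvpoly n k (\<lambda>y X. (f y X \<cdot>\<^sub>m F y X) $$ (i, j))"
  proof (rule mvpoly_ext[OF mvpoly_mult[OF f pmat_entry[OF F ij]]])
    fix y X show "(f y X \<cdot>\<^sub>m F y X) $$ (i, j) = f y X * F y X $$ (i, j)"
      using pmat_carrier[OF F, of y X] ij by auto
  qed
qed

lemma pmat_transpose: assumes F: "pmat n k r s F"
  shows "pmat n k s r (\<lambda>y X. transpose_mat (F y X))"
  unfolding pmat_def
proof (intro conjI allI impI)
  fix y X show "transpose_mat (F y X) \<in> carrier_mat s r" using pmat_carrier[OF F] by auto
next
  fix i j assume ij: "i < s" "j < r"
  show "mvpoly n k (\<lambda>y X. transpose_mat (F y X) $$ (i, j))"
  proof (rule mvpoly_ext[OF pmat_entry[OF F, of j i]])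
    fix y X show "transpose_mat (F y X) $$ (i, j) = F y X $$ (j, i)"
      using pmat_carrier[OF F, of y X] ij by auto
  qed (use ij in auto)
qed

lemma pmat_one: "pmat n k m m (\<lambda>y X. 1\<^sub>m m)"
  unfolding pmat_def by (auto intro: mvpoly_ext[OF mvpoly_const])

lemma mvpoly_det: assumes F: "pmat n k m m F"
  shows "mvpoly n k (\<lambda>y X. det (F y X))"
proof (rule mvpoly_ext)
  show "mvpoly n k (\<lambda>y X. \<Sum>p\<in>{p. p permutes {0..<m}}. signof p * (\<Prod>i=0..<m. F y X $$ (i, p i)))"
    by (intro mvpoly_sum mvpoly_mult mvpoly_prod mvpoly_const pmat_entry[OF F])
       (auto simp: permutes_in_image)
next
  fix y X show "det (F y X) = (\<Sum>p\<in>{p. p permutes {0..<m}}. signof p * (\<Prod>i=0..<m. F y X $$ (i, p i)))"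
    by (rule det_def'[OF pmat_carrier[OF F]])
qed

lemma pmat_adj: assumes F: "pmat n k m m F"
  shows "pmat n k m m (\<lambda>y X. adj_mat (F y X))"
proof (rule pmat_ext)
  show "pmat n k m m (\<lambda>y X. mat m m (\<lambda>(i, j). (-1)^(j+i) * det (mat_delete (F y X) j i)))"
  proof (rule pmat_mat, rule mvpoly_mult[OF mvpoly_const], rule mvpoly_det)
    fix i j assume ij: "i < m" "j < m"
    show "pmat n k (m - 1) (m - 1) (\<lambda>y X. mat_delete (F y X) j i)"
    proof (rule pmat_ext)
      show "pmat n k (m - 1) (m - 1) (\<lambda>y X. mat (m - 1) (m - 1) (\<lambda>(i', j').
         F y X $$ (if i' < j then i' else Suc i', if j' < i then j' else Suc j')))"
        by (rule pmat_mat, rule pmat_entry[OF F]) auto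
    next
      fix y X show "mat_delete (F y X) j i = mat (m - 1) (m - 1) (\<lambda>(i', j').
         F y X $$ (if i' < j then i' else Suc i', if j' < i then j' else Suc j'))"
        unfolding mat_delete_def using pmat_carrier[OF F, of y X] by auto
    qed
  qed
next
  fix y X show "adj_mat (F y X) = mat m m (\<lambda>(i, j). (-1)^(j+i) * det (mat_delete (F y X) j i))"
    unfolding adj_mat_def cofactor_def using pmat_carrier[OF F, of y X] by auto
qed



lemma mat_inverse_right:
  fixes A B :: "real mat"
  assumes A: "A \<in> carrier_mat m m" and B: "B \<in> carrier_mat m m" and AB: "A * B = 1\<^sub>m m"
  shows "mat_inverse A = Some B"
proof -
  have "det A * det B = 1" using arg_cong[OF AB, of det] det_mult[OF A B] by simp
  then have dA: "det A \<noteq> 0" by auto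
  show ?thesis
  proof (cases "mat_inverse A")
    case None
    from mat_inverse(1)[OF A None, of undefined] det_non_zero_imp_unit[OF A dA, of undefined] show ?thesis by blast
  next
    case (Some B')
    from mat_inverse(2)[OF A Some] have B'A: "B' * A = 1\<^sub>m m" and B': "B' \<in> carrier_mat m m" by auto
    have "B' = B' * (A * B)" using AB B' by simp
    also have "\<dots> = (B' * A) * B" using A B B' by (simp add: assoc_mult_mat)
    also have "\<dots> = B" using B'A B by simp
    finally show ?thesis using Some by simp
  qed
qed

lemma mat_inverse_det0:
  fixes A :: "real mat"
  assumes A: "A \<in> carrier_mat m m" and d: "det A = 0"
  shows "mat_inverse A = None"
proof (cases "mat_inverse A")
  case (Some B)
  from mat_inverse(2)[OF A Some] have "A * B = 1\<^sub>m m" "B \<in> carrier_mat m m" by auto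
  then have "det A * det B = 1" using det_mult[OF A] by (metis det_one)
  with d show ?thesis by simp
qed simp

lemma mat_inverse_adj:
  fixes A :: "real mat"
  assumes A: "A \<in> carrier_mat m m" and d: "det A \<noteq> 0"
  shows "mat_inverse A = Some ((1 / det A) \<cdot>\<^sub>m adj_mat A)"
proof (rule mat_inverse_right[OF A])
  show "(1 / det A) \<cdot>\<^sub>m adj_mat A \<in> carrier_mat m m" using adj_mat(1)[OF A] by simp
  have "A * ((1 / det A) \<cdot>\<^sub>m adj_mat A) = (1 / det A) \<cdot>\<^sub>m (A * adj_mat A)"
    using mult_smult_distrib[OF A adj_mat(1)[OF A]] .
  also have "\<dots> = 1\<^sub>m m" unfolding adj_mat(2)[OF A] using d
    by (intro eq_matI) auto
  finally show "A * ((1 / det A) \<cdot>\<^sub>m adj_mat A) = 1\<^sub>m m" .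
qed

lemma mat_inverse_None_iff:
  fixes A :: "real mat"
  assumes A: "A \<in> carrier_mat m m"
  shows "mat_inverse A = None \<longleftrightarrow> det A = 0"
  using mat_inverse_det0[OF A] mat_inverse_adj[OF A] by (cases "det A = 0") auto

context vec_space begin
lemma non_distinct_low_rank':
assumes "A \<in> carrier_mat n nc"
and "\<not> distinct (cols A)"
shows "rank A < nc"
proof -
  obtain S where "maximal S (\<lambda>T. T \<subseteq> set (cols A) \<and> lin_indpt T)"
    using maximal_exists[of "(\<lambda>T. T \<subseteq> set (cols A) \<and> lin_indpt T)" "card (set (cols A))" "{}"]
    by (meson List.finite_set card_mono empty_iff empty_subsetI finite_lin_indpt2 rev_finite_subset)
  then have "card S \<le> card (set (cols A))" by (simp add: card_mono maximal_def)
  then have "card S < nc"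
    using assms(1) cols_length card_length \<open>\<not> distinct (cols A)\<close> card_distinct carrier_matD(2) nat_less_le
    by (metis dual_order.antisym dual_order.trans)
  then show ?thesis
    using rank_card_indpt[OF \<open>A \<in> carrier_mat n nc\<close> \<open>maximal S (\<lambda>T. T \<subseteq> set (cols A) \<and> lin_indpt T)\<close>]
    by simp
qed

lemma full_rank_kernel:
  assumes A: "A \<in> carrier_mat n nc" and r: "rank A = nc"
    and v: "v \<in> carrier_vec nc" and Av: "A *\<^sub>v v = 0\<^sub>v n"
  shows "v = 0\<^sub>v nc"
proof (rule ccontr)
  assume nz: "v \<noteq> 0\<^sub>v nc"
  have dist: "distinct (cols A)" using non_distinct_low_rank'[OF A] r by auto
  have "lin_indpt (set (cols A))" using full_rank_lin_indpt[OF A r dist] .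
  then show False using lin_depI[OF A v nz Av dist] by blast
qed
end

lemma real_conj_vec: "conjugate (w :: real vec) = w"
  by (rule eq_vecI) (auto simp: conjugate_vec_def)

lemma design_det:
  fixes X :: "real mat"
  assumes X: "X \<in> carrier_mat n k" and r: "vec_space.rank n X = k"
  shows "det (transpose_mat X * X) \<noteq> 0"
proof
  have XX: "transpose_mat X * X \<in> carrier_mat k k" using X by auto
  assume "det (transpose_mat X * X) = 0"
  then obtain v where v: "v \<in> carrier_vec k" "v \<noteq> 0\<^sub>v k" "(transpose_mat X * X) *\<^sub>v v = 0\<^sub>v k"
    using det_0_iff_vec_prod_zero[OF XX] by blast
  define w where "w = X *\<^sub>v v"
  have w: "w \<in> carrier_vec n" using X v by (simp add: w_def)
  have "transpose_mat X *\<^sub>v w = 0\<^sub>v k" using v X unfolding w_def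
    by (metis assoc_mult_mat_vec carrier_matD(2) transpose_carrier_mat)
  then have "(transpose_mat X *\<^sub>v w) \<bullet> v = 0" using v by simp
  then have "w \<bullet> w = 0" using transpose_vec_mult_scalar[OF X v(1) w] unfolding w_def by simp
  then have "w \<bullet>c w = 0" by (simp add: real_conj_vec)
  then have "w = 0\<^sub>v n" using conjugate_square_eq_0_vec[OF w] by simp
  then have "v = 0\<^sub>v k" using vec_space.full_rank_kernel[OF X r v(1)] unfolding w_def by simp
  with v show False by simp
qed



definition Xn :: "nat \<Rightarrow> nat \<Rightarrow> real mat \<Rightarrow> real mat" where
  "Xn n k X = mat n k (\<lambda>(i, j). X $$ (i, j))"
definition yc :: "nat \<Rightarrow> real vec \<Rightarrow> real mat" where
  "yc n y = mat n 1 (\<lambda>(i, j). y $ i)"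
definition Uc :: "real mat \<Rightarrow> real mat \<Rightarrow> real mat" where
  "Uc X Y = det (transpose_mat X * X) \<cdot>\<^sub>m Y - X * (adj_mat (transpose_mat X * X) * (transpose_mat X * Y))"
definition Wm :: "nat \<Rightarrow> real mat \<Rightarrow> real mat \<Rightarrow> real mat" where
  "Wm n X Y = transpose_mat X * mat_diag n (\<lambda>i. Uc X Y $$ (i, 0))"

lemma pmat_Xn: "pmat n k n k (\<lambda>y X. Xn n k X)"
  unfolding Xn_def by (rule pmat_mat, rule mvpoly.xvar)

lemma pmat_yc: "pmat n k n 1 (\<lambda>y X. yc n y)"
  unfolding yc_def by (rule pmat_mat, rule mvpoly.yvar)

lemma pmat_Uc: "pmat n k n 1 (\<lambda>y X. Uc (Xn n k X) (yc n y))"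
proof -
  have XT: "pmat n k k n (\<lambda>y X. transpose_mat (Xn n k X))" by (rule pmat_transpose[OF pmat_Xn])
  have G: "pmat n k k k (\<lambda>y X. transpose_mat (Xn n k X) * Xn n k X)" by (rule pmat_mult[OF XT pmat_Xn])
  have A: "pmat n k k k (\<lambda>y X. adj_mat (transpose_mat (Xn n k X) * Xn n k X))" by (rule pmat_adj[OF G])
  have B: "pmat n k k 1 (\<lambda>y X. transpose_mat (Xn n k X) * yc n y)" by (rule pmat_mult[OF XT pmat_yc])
  have C: "pmat n k n 1 (\<lambda>y X. Xn n k X * (adj_mat (transpose_mat (Xn n k X) * Xn n k X) * (transpose_mat (Xn n k X) * yc n y)))"
    by (rule pmat_mult[OF pmat_Xn pmat_mult[OF A B]])
  show ?thesis unfolding Uc_def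
    by (rule pmat_minus[OF pmat_smult[OF mvpoly_det[OF G] pmat_yc] C])
qed

lemma pmat_Wm: "pmat n k k n (\<lambda>y X. Wm n (Xn n k X) (yc n y))"
  unfolding Wm_def
proof (rule pmat_mult[OF pmat_transpose[OF pmat_Xn]])
  show "pmat n k n n (\<lambda>y X. mat_diag n (\<lambda>i. Uc (Xn n k X) (yc n y) $$ (i, 0)))"
    unfolding mat_diag_def
    by (rule pmat_mat, rule mvpoly_if[OF pmat_entry[OF pmat_Uc] mvpoly_const]) auto
qed

lemma smult_mat_vec: "A \<in> carrier_mat nr nc \<Longrightarrow> v \<in> carrier_vec nc \<Longrightarrow>
   (a \<cdot>\<^sub>m A) *\<^sub>v v = a \<cdot>\<^sub>v (A *\<^sub>v (v :: real vec))"
  by (rule eq_vecI) (auto simp: scalar_prod_def sum_distrib_left ac_simps)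

lemma V_hat_W:
  fixes X :: "real mat" and y :: "real vec"
  assumes X: "X \<in> carrier_mat n k" and y: "y \<in> carrier_vec n"
    and c: "det (transpose_mat X * X) \<noteq> 0"
  shows "V_hat X y = (1 / det (transpose_mat X * X)) \<cdot>\<^sub>m Wm n X (yc n y)"
proof -
  define c where "c = det (transpose_mat X * X)"
  define G where "G = transpose_mat X * X"
  have G: "G \<in> carrier_mat k k" using X by (simp add: G_def)
  have adjG: "adj_mat G \<in> carrier_mat k k" using adj_mat(1)[OF G] .
  have colY: "col (yc n y) 0 = y" using y by (intro eq_vecI) (auto simp: yc_def)
  have Yc: "yc n y \<in> carrier_mat n 1" by (simp add: yc_def)
  have beta: "beta_hat X y = (1 / c) \<cdot>\<^sub>v (adj_mat G *\<^sub>v (transpose_mat X *\<^sub>v y))"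
  proof -
    have inv: "mat_inverse (transpose_mat X * X) = Some ((1 / c) \<cdot>\<^sub>m adj_mat G)"
      using mat_inverse_adj[OF G c[folded G_def]] unfolding c_def G_def .
    show ?thesis unfolding beta_hat_def inv G_def option.sel
    by (rule smult_mat_vec[OF adjG[unfolded G_def]]) (use X y in auto)
  qed
  have u: "u_hat X y $ i = (1 / c) * Uc X (yc n y) $$ (i, 0)" if i: "i < n" for i
  proof -
    have "Uc X (yc n y) $$ (i, 0) = c * y $ i - (X * (adj_mat G * (transpose_mat X * yc n y))) $$ (i, 0)"
      unfolding Uc_def c_def G_def using i X Yc adjG[unfolded G_def] by (simp add: yc_def)
    also have "(X * (adj_mat G * (transpose_mat X * yc n y))) $$ (i, 0)
       = col (X * (adj_mat G * (transpose_mat X * yc n y))) 0 $ i"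
      using i X adjG Yc by simp
    also have "\<dots> = (X *\<^sub>v (adj_mat G *\<^sub>v (transpose_mat X *\<^sub>v y))) $ i"
    proof -
      have N: "transpose_mat X * yc n y \<in> carrier_mat k 1" using X Yc by auto
      have M: "adj_mat G * (transpose_mat X * yc n y) \<in> carrier_mat k 1" using adjG N by auto
      show ?thesis
        using col_mult2[OF X M, of 0] col_mult2[OF adjG N, of 0] col_mult2[of "transpose_mat X" k n "yc n y" 1 0] X Yc colY
        by simp
    qed
    finally have U: "Uc X (yc n y) $$ (i, 0) = c * y $ i - (X *\<^sub>v (adj_mat G *\<^sub>v (transpose_mat X *\<^sub>v y))) $ i" .
    have "u_hat X y $ i = y $ i - (X *\<^sub>v beta_hat X y) $ i"
      unfolding u_hat_def using i X y by simp
    also have "X *\<^sub>v beta_hat X y = (1 / c) \<cdot>\<^sub>v (X *\<^sub>v (adj_mat G *\<^sub>v (transpose_mat X *\<^sub>v y)))"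
      unfolding beta using X adjG y by (intro mult_mat_vec[OF X]) auto
    finally show ?thesis unfolding U using i X c[folded G_def c_def] by (simp add: field_simps)
  qed
  have "mat_diag n (\<lambda>i. u_hat X y $ i) = (1 / c) \<cdot>\<^sub>m mat_diag n (\<lambda>i. Uc X (yc n y) $$ (i, 0))"
    by (rule eq_matI) (auto simp: mat_diag_def u)
  then show ?thesis unfolding V_hat_def Wm_def c_def[symmetric] using X
    by (simp add: mult_smult_distrib[of _ k n _ n])
qed

lemma Xn_id: "X \<in> carrier_mat n k \<Longrightarrow> Xn n k X = X"
  unfolding Xn_def by (rule eq_matI) auto



definition d1f :: "nat \<Rightarrow> real mat \<Rightarrow> real" where
  "d1f p W = det (V_1 p W * transpose_mat (V_1 p W))"
definition Aadj :: "nat \<Rightarrow> real mat \<Rightarrow> real mat" where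
  "Aadj p W = V_p p W * transpose_mat (V_1 p W) * adj_mat (V_1 p W * transpose_mat (V_1 p W))"
definition d2f :: "nat \<Rightarrow> nat \<Rightarrow> real mat \<Rightarrow> real" where
  "d2f k p W = det (d1f p W \<cdot>\<^sub>m 1\<^sub>m k - A_sum k p (Aadj p W))"
definition ZPf :: "nat \<Rightarrow> real mat \<Rightarrow> real mat" where
  "ZPf p W = d1f p W \<cdot>\<^sub>m V_p p W - Aadj p W * V_1 p W"

lemma V_p_carrier: "V \<in> carrier_mat k n \<Longrightarrow> V_p p V \<in> carrier_mat k (n - p)"
  unfolding V_p_def by auto
lemma V_1_carrier: "V \<in> carrier_mat k n \<Longrightarrow> V_1 p V \<in> carrier_mat (k * p) (n - p)"
  unfolding V_1_def by auto
lemma A_sum_carrier: "A_sum k p A \<in> carrier_mat k k"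
  unfolding A_sum_def by auto

lemma V_p_smult: "V_p p (a \<cdot>\<^sub>m V) = a \<cdot>\<^sub>m V_p p V"
  unfolding V_p_def by (rule eq_matI) auto
lemma V_1_smult: "V_1 p (a \<cdot>\<^sub>m V) = a \<cdot>\<^sub>m V_1 p V"
proof (rule eq_matI)
  fix i j assume "i < dim_row (a \<cdot>\<^sub>m V_1 p V)" "j < dim_col (a \<cdot>\<^sub>m V_1 p V)"
  then have ij: "i < dim_row V * p" "j < dim_col V - p" unfolding V_1_def by auto
  then have "dim_row V > 0" by (cases "dim_row V") auto
  then have "i mod dim_row V < dim_row V" by simp
  moreover have "j + p - 1 - i div dim_row V < dim_col V" using ij by auto
  ultimately show "V_1 p (a \<cdot>\<^sub>m V) $$ (i, j) = (a \<cdot>\<^sub>m V_1 p V) $$ (i, j)"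
    using ij unfolding V_1_def by auto
qed (auto simp: V_1_def)

lemma A_sum_smult: assumes A: "A \<in> carrier_mat k (k * p)"
  shows "A_sum k p (a \<cdot>\<^sub>m A) = a \<cdot>\<^sub>m A_sum k p A"
proof (rule eq_matI)
  fix i j assume "i < dim_row (a \<cdot>\<^sub>m A_sum k p A)" "j < dim_col (a \<cdot>\<^sub>m A_sum k p A)"
  then have ij: "i < k" "j < k" unfolding A_sum_def by auto
  have idx: "l * k + j < k * p" if "l < p" for l
  proof -
    have "l * k + j < l * k + k" using ij by simp
    also have "\<dots> = (l + 1) * k" by simp
    also have "\<dots> \<le> p * k" using that by (intro mult_right_mono) auto
    finally show ?thesis by (simp add: mult.commute)
  qed
  have "A_sum k p (a \<cdot>\<^sub>m A) $$ (i, j) = (\<Sum>l<p. a * A $$ (i, l * k + j))"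
    unfolding A_sum_def using ij A idx by (auto intro!: sum.cong)
  also have "\<dots> = (a \<cdot>\<^sub>m A_sum k p A) $$ (i, j)"
    unfolding A_sum_def using ij by (simp add: sum_distrib_left)
  finally show "A_sum k p (a \<cdot>\<^sub>m A) $$ (i, j) = (a \<cdot>\<^sub>m A_sum k p A) $$ (i, j)" .
qed (auto simp: A_sum_def)

lemma tr_smult: "transpose_mat (a \<cdot>\<^sub>m A) = a \<cdot>\<^sub>m transpose_mat A"
  by (rule eq_matI) auto
lemma smult_smult_mat: "a \<cdot>\<^sub>m (b \<cdot>\<^sub>m A) = (a * b) \<cdot>\<^sub>m (A :: real mat)"
  by (rule eq_matI) auto

lemma A_hat_rel:
  assumes W: "W \<in> carrier_mat k n" and c: "c \<noteq> 0"
  shows "A_hat p ((1 / c) \<cdot>\<^sub>m W) = (if d1f p W = 0 then None else Some ((1 / d1f p W) \<cdot>\<^sub>m Aadj p W))"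
proof -
  define W1 where "W1 = V_1 p W"
  define Wq where "Wq = V_p p W"
  define G where "G = W1 * transpose_mat W1"
  have W1: "W1 \<in> carrier_mat (k * p) (n - p)" unfolding W1_def using V_1_carrier[OF W] .
  have Wq: "Wq \<in> carrier_mat k (n - p)" unfolding Wq_def using V_p_carrier[OF W] .
  have G: "G \<in> carrier_mat (k * p) (k * p)" unfolding G_def using W1 by auto
  have VV: "V_1 p ((1 / c) \<cdot>\<^sub>m W) * transpose_mat (V_1 p ((1 / c) \<cdot>\<^sub>m W)) = ((1 / c) * (1 / c)) \<cdot>\<^sub>m G"
    unfolding V_1_smult tr_smult G_def W1_def[symmetric]
    using W1 by (simp add: mult_smult_assoc_mat[of _ "k*p" "n-p"] mult_smult_distrib[of _ "k*p" "n-p"] smult_smult_mat)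
  have VVc: "((1 / c) * (1 / c)) \<cdot>\<^sub>m G \<in> carrier_mat (k * p) (k * p)" using G by simp
  show ?thesis
  proof (cases "d1f p W = 0")
    case True
    then have "det G = 0" unfolding d1f_def G_def W1_def .
    then have "mat_inverse (((1 / c) * (1 / c)) \<cdot>\<^sub>m G) = None"
      using mat_inverse_None_iff[OF VVc] G by simp
    then show ?thesis unfolding A_hat_def VV using True by simp
  next
    case False
    define d where "d = d1f p W"
    have dG: "det G = d" unfolding d_def d1f_def G_def W1_def ..
    have d: "d \<noteq> 0" using False d_def by simp
    have adj: "adj_mat G \<in> carrier_mat (k * p) (k * p)" using adj_mat(1)[OF G] .
    have inv: "mat_inverse (((1 / c) * (1 / c)) \<cdot>\<^sub>m G) = Some ((c * c / d) \<cdot>\<^sub>m adj_mat G)"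
    proof (rule mat_inverse_right[OF VVc])
      show "(c * c / d) \<cdot>\<^sub>m adj_mat G \<in> carrier_mat (k * p) (k * p)" using adj by simp
      have "((1 / c) * (1 / c)) \<cdot>\<^sub>m G * ((c * c / d) \<cdot>\<^sub>m adj_mat G) = ((1 / c) * (1 / c) * (c * c / d)) \<cdot>\<^sub>m (G * adj_mat G)"
      proof -
        have adj': "(c * c / d) \<cdot>\<^sub>m adj_mat G \<in> carrier_mat (k * p) (k * p)" using adj by simp
        show ?thesis unfolding mult_smult_assoc_mat[OF G adj'] mult_smult_distrib[OF G adj] smult_smult_mat ..
      qed
      also have "\<dots> = 1\<^sub>m (k * p)" unfolding adj_mat(2)[OF G] dG using c d
        by (intro eq_matI) auto
      finally show "((1 / c) * (1 / c)) \<cdot>\<^sub>m G * ((c * c / d) \<cdot>\<^sub>m adj_mat G) = 1\<^sub>m (k * p)" .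
    qed
    have "V_p p ((1 / c) \<cdot>\<^sub>m W) * transpose_mat (V_1 p ((1 / c) \<cdot>\<^sub>m W)) * ((c * c / d) \<cdot>\<^sub>m adj_mat G)
        = ((1 / c) * (1 / c) * (c * c / d)) \<cdot>\<^sub>m (Wq * transpose_mat W1 * adj_mat G)"
      unfolding V_p_smult V_1_smult tr_smult Wq_def[symmetric] W1_def[symmetric]
      using Wq W1 adj
      by (simp add: mult_smult_assoc_mat[of _ k "n-p"] mult_smult_distrib[of _ k "n-p"]
          mult_smult_assoc_mat[of _ k "k*p"] mult_smult_distrib[of _ k "k*p"] smult_smult_mat)
    also have "\<dots> = (1 / d) \<cdot>\<^sub>m Aadj p W"
      unfolding Aadj_def Wq_def[symmetric] W1_def[symmetric] G_def[symmetric] using c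
      by (simp add: field_simps)
    finally show ?thesis unfolding A_hat_def VV inv using False d_def by simp
  qed
qed

lemma Aadj_carrier: "W \<in> carrier_mat k n \<Longrightarrow> Aadj p W \<in> carrier_mat k (k * p)"
  unfolding Aadj_def using V_1_carrier[of W k n p] V_p_carrier[of W k n p]
  by (metis adj_mat(1) mult_carrier_mat transpose_carrier_mat)

lemma inv_rel:
  assumes A: "A \<in> carrier_mat k (k * p)" and d: "d \<noteq> 0"
  shows "mat_inverse (1\<^sub>m k - A_sum k p ((1 / d) \<cdot>\<^sub>m A)) = None \<longleftrightarrow> det (d \<cdot>\<^sub>m 1\<^sub>m k - A_sum k p A) = 0"
proof -
  have eq: "1\<^sub>m k - A_sum k p ((1 / d) \<cdot>\<^sub>m A) = (1 / d) \<cdot>\<^sub>m (d \<cdot>\<^sub>m 1\<^sub>m k - A_sum k p A)"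
    unfolding A_sum_smult[OF A] using d A_sum_carrier[of k p A]
    by (intro eq_matI) (auto simp: field_simps)
  have C: "(1 / d) \<cdot>\<^sub>m (d \<cdot>\<^sub>m 1\<^sub>m k - A_sum k p A) \<in> carrier_mat k k" using A_sum_carrier[of k p A] by auto
  have C2: "d \<cdot>\<^sub>m 1\<^sub>m k - A_sum k p A \<in> carrier_mat k k" using A_sum_carrier[of k p A] by auto
  show ?thesis unfolding eq mat_inverse_None_iff[OF C] det_smult using d C2 by simp
qed

lemma Z_rel:
  assumes W: "W \<in> carrier_mat k n" and c: "c \<noteq> 0" and d: "d1f p W \<noteq> 0"
  shows "V_p p ((1 / c) \<cdot>\<^sub>m W) - ((1 / d1f p W) \<cdot>\<^sub>m Aadj p W) * V_1 p ((1 / c) \<cdot>\<^sub>m W)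
     = (1 / (c * d1f p W)) \<cdot>\<^sub>m ZPf p W"
proof -
  define d where "d = d1f p W"
  have A: "Aadj p W \<in> carrier_mat k (k * p)" using Aadj_carrier[OF W] .
  have W1: "V_1 p W \<in> carrier_mat (k * p) (n - p)" using V_1_carrier[OF W] .
  have Wq: "V_p p W \<in> carrier_mat k (n - p)" using V_p_carrier[OF W] .
  have W1': "(1 / c) \<cdot>\<^sub>m V_1 p W \<in> carrier_mat (k * p) (n - p)" using W1 by simp
  have "((1 / d) \<cdot>\<^sub>m Aadj p W) * V_1 p ((1 / c) \<cdot>\<^sub>m W) = ((1 / d) * (1 / c)) \<cdot>\<^sub>m (Aadj p W * V_1 p W)"
    unfolding V_1_smult mult_smult_assoc_mat[OF A W1'] mult_smult_distrib[OF A W1] smult_smult_mat ..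
  moreover have "Aadj p W * V_1 p W \<in> carrier_mat k (n - p)" using A W1 by simp
  ultimately show ?thesis unfolding V_p_smult ZPf_def d_def[symmetric] using Wq A W1 c d[folded d_def]
    by (intro eq_matI) (auto simp: field_simps)
qed



definition AMcond :: "nat \<Rightarrow> real mat \<Rightarrow> bool" where
  "AMcond jj Z \<longleftrightarrow> (\<forall>i<dim_row Z. (\<Sum>l<dim_col Z - 1. (Z $$ (i, l))\<^sup>2) \<noteq> 0 \<and> rho_hat Z i \<noteq> 1
                       \<and> (jj = 1 \<longrightarrow> rho_hat Z i \<noteq> -1))"
definition AMden :: "real vec \<Rightarrow> real mat \<Rightarrow> real" where
  "AMden \<omega> Z = (\<Sum>i<dim_row Z. \<omega> $ i * (sigma2_hat Z i)\<^sup>2 / (1 - rho_hat Z i) ^ 4)"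
definition NWden :: "real vec \<Rightarrow> (int \<Rightarrow> real) \<Rightarrow> real mat \<Rightarrow> real" where
  "NWden \<omega> w Z = (\<Sum>i\<in>{-(int (dim_col Z) - 1)..int (dim_col Z) - 1}. w i * (\<omega> \<bullet> (Gam Z (nat \<bar>i\<bar>) *\<^sub>v \<omega>)))"

lemma bw_AM_None: "bandwidth_val (AM c1 c2 jj \<omega>) N Z = None \<longleftrightarrow> \<not> (AMcond jj Z \<and> AMden \<omega> Z \<noteq> 0)"
  unfolding bandwidth_val_def AMcond_def AMden_def Let_def by auto

lemma bw_NW_None: "bandwidth_val (NW \<omega> w c1 c2 c3) N Z = None \<longleftrightarrow> NWden \<omega> w Z = 0"
  unfolding bandwidth_val_def NWden_def Let_def by auto

lemma bw_KV_None: "bandwidth_val (KV M) N Z \<noteq> None"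
  unfolding bandwidth_val_def by auto

lemma rho_smult: assumes i: "i < dim_row Z" and a: "a \<noteq> 0"
  shows "rho_hat (a \<cdot>\<^sub>m Z) i = rho_hat Z i"
proof -
  have r1: "(\<Sum>j\<in>{1..<dim_col Z}. (a \<cdot>\<^sub>m Z) $$ (i, j) * (a \<cdot>\<^sub>m Z) $$ (i, j - 1))
      = (a * a) * (\<Sum>j\<in>{1..<dim_col Z}. Z $$ (i, j) * Z $$ (i, j - 1))"
    unfolding sum_distrib_left using i by (intro sum.cong) auto
  have r2: "(\<Sum>j<dim_col Z - 1. ((a \<cdot>\<^sub>m Z) $$ (i, j))\<^sup>2) = (a * a) * (\<Sum>j<dim_col Z - 1. (Z $$ (i, j))\<^sup>2)"
    unfolding sum_distrib_left using i by (intro sum.cong) (auto simp: power2_eq_square)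
  have dc: "dim_col (a \<cdot>\<^sub>m Z) = dim_col Z" by simp
  show ?thesis unfolding rho_hat_def dc r1 r2 using a by simp
qed

lemma sumsq_smult: fixes Z :: "real mat" assumes i: "i < dim_row Z"
  shows "(\<Sum>j<dim_col Z - 1. ((a \<cdot>\<^sub>m Z) $$ (i, j))\<^sup>2) = (a * a) * (\<Sum>j<dim_col Z - 1. (Z $$ (i, j))\<^sup>2)"
    unfolding sum_distrib_left using i by (intro sum.cong) (auto simp: power2_eq_square)

lemma sigma2_smult: assumes i: "i < dim_row Z" and a: "a \<noteq> 0"
  shows "sigma2_hat (a \<cdot>\<^sub>m Z) i = (a * a) * sigma2_hat Z i"
proof -
  have "(\<Sum>j\<in>{1..<dim_col Z}. ((a \<cdot>\<^sub>m Z) $$ (i, j) - rho_hat Z i * (a \<cdot>\<^sub>m Z) $$ (i, j - 1))\<^sup>2)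
     = (a * a) * (\<Sum>j\<in>{1..<dim_col Z}. (Z $$ (i, j) - rho_hat Z i * Z $$ (i, j - 1))\<^sup>2)"
    unfolding sum_distrib_left using i by (intro sum.cong) (auto simp: power2_eq_square algebra_simps)
  then show ?thesis unfolding sigma2_hat_def rho_smult[OF i a] by simp
qed

lemma AMcond_smult: assumes a: "a \<noteq> 0" shows "AMcond jj (a \<cdot>\<^sub>m Z) \<longleftrightarrow> AMcond jj Z"
  unfolding AMcond_def using rho_smult[OF _ a, of _ Z] sumsq_smult[of _ Z a] a by auto

lemma AMden_smult: assumes a: "a \<noteq> 0" shows "AMden \<omega> (a \<cdot>\<^sub>m Z) = (a * a) ^ 2 * AMden \<omega> Z"
  unfolding AMden_def sum_distrib_left
  by (rule sum.cong) (auto simp: rho_smult[OF _ a] sigma2_smult[OF _ a] power_mult_distrib)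

lemma Gam_smult: "Gam (a \<cdot>\<^sub>m Z) s = (a * a) \<cdot>\<^sub>m Gam Z s"
proof (rule eq_matI)
  fix x y assume "x < dim_row ((a * a) \<cdot>\<^sub>m Gam Z s)" "y < dim_col ((a * a) \<cdot>\<^sub>m Gam Z s)"
  then have xy: "x < dim_row Z" "y < dim_row Z" unfolding Gam_def by auto
  have "(\<Sum>j\<in>{s..<dim_col Z}. (a \<cdot>\<^sub>m Z) $$ (x, j) * (a \<cdot>\<^sub>m Z) $$ (y, j - s))
      = (a * a) * (\<Sum>j\<in>{s..<dim_col Z}. Z $$ (x, j) * Z $$ (y, j - s))"
    unfolding sum_distrib_left using xy by (intro sum.cong) auto
  then show "Gam (a \<cdot>\<^sub>m Z) s $$ (x, y) = ((a * a) \<cdot>\<^sub>m Gam Z s) $$ (x, y)"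
    unfolding Gam_def using xy by simp
qed (auto simp: Gam_def)

lemma NWden_smult: assumes w: "\<omega> \<in> carrier_vec (dim_row Z)"
  shows "NWden \<omega> w (a \<cdot>\<^sub>m Z) = (a * a) * NWden \<omega> w Z"
proof -
  have "\<omega> \<bullet> (Gam (a \<cdot>\<^sub>m Z) s *\<^sub>v \<omega>) = (a * a) * (\<omega> \<bullet> (Gam Z s *\<^sub>v \<omega>))" for s
  proof -
    have G: "Gam Z s \<in> carrier_mat (dim_row Z) (dim_row Z)" unfolding Gam_def by auto
    show ?thesis unfolding Gam_smult
      using G w by (simp add: scalar_prod_def sum_distrib_left ac_simps)
  qed
  then show ?thesis unfolding NWden_def sum_distrib_left by (simp add: ac_simps)
qed

lemma bw_scale:
  assumes a: "a \<noteq> 0" and ok: "bandwidth_ok N (dim_row Z) p b"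
  shows "bandwidth_val b N (a \<cdot>\<^sub>m Z) = None \<longleftrightarrow> bandwidth_val b N Z = None"
proof (cases b)
  case (AM c1 c2 jj \<omega>)
  show ?thesis unfolding AM bw_AM_None AMcond_smult[OF a] AMden_smult[OF a] using a by simp
next
  case (NW \<omega> w c1 c2 c3)
  then have "\<omega> \<in> carrier_vec (dim_row Z)" using ok unfolding bandwidth_ok_def weights_vector_def by auto
  then show ?thesis unfolding NW bw_NW_None using NWden_smult[of \<omega> Z w a] a by simp
next
  case (KV M)
  show ?thesis unfolding KV using bw_KV_None[of M N "a \<cdot>\<^sub>m Z"] bw_KV_None[of M N Z] by blast
qed



definition aaf :: "nat \<Rightarrow> real mat \<Rightarrow> nat \<Rightarrow> real" where
  "aaf m Z i = (\<Sum>j\<in>{1..<m}. Z $$ (i, j) * Z $$ (i, j - 1))"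
definition bbf :: "nat \<Rightarrow> real mat \<Rightarrow> nat \<Rightarrow> real" where
  "bbf m Z i = (\<Sum>j<m - 1. (Z $$ (i, j))\<^sup>2)"
definition ttf :: "nat \<Rightarrow> real mat \<Rightarrow> nat \<Rightarrow> real" where
  "ttf m Z i = (\<Sum>j\<in>{1..<m}. (bbf m Z i * Z $$ (i, j) - aaf m Z i * Z $$ (i, j - 1))\<^sup>2)"
definition qqf :: "nat \<Rightarrow> real mat \<Rightarrow> nat \<Rightarrow> real" where
  "qqf m Z i = bbf m Z i - aaf m Z i"
definition AMP :: "nat \<Rightarrow> nat \<Rightarrow> nat \<Rightarrow> real mat \<Rightarrow> real" where
  "AMP k m jj Z = (\<Prod>i<k. bbf m Z i * qqf m Z i * (if jj = 1 then bbf m Z i + aaf m Z i else 1))"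
definition AMD :: "nat \<Rightarrow> nat \<Rightarrow> real vec \<Rightarrow> real mat \<Rightarrow> real" where
  "AMD k m \<omega> Z = (\<Sum>i<k. \<omega> $ i * (ttf m Z i)\<^sup>2 * (\<Prod>l\<in>{..<k} - {i}. (qqf m Z l) ^ 4))"
definition NWH :: "nat \<Rightarrow> nat \<Rightarrow> real vec \<Rightarrow> (int \<Rightarrow> real) \<Rightarrow> real mat \<Rightarrow> real" where
  "NWH k m \<omega> w Z = (\<Sum>i\<in>{-(int m - 1)..int m - 1}. w i * (\<Sum>x<k. \<omega> $ x * (\<Sum>y<k.
      ((\<Sum>j\<in>{nat \<bar>i\<bar>..<m}. Z $$ (x, j) * Z $$ (y, j - nat \<bar>i\<bar>)) / real m) * \<omega> $ y)))"
definition Hb :: "bandwidth \<Rightarrow> nat \<Rightarrow> nat \<Rightarrow> real mat \<Rightarrow> real" where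
  "Hb b k m Z = (case b of AM c1 c2 jj \<omega> \<Rightarrow> AMP k m jj Z * AMD k m \<omega> Z
     | NW \<omega> w c1 c2 c3 \<Rightarrow> NWH k m \<omega> w Z | KV M \<Rightarrow> 1)"

lemma bw_poly: assumes F: "pmat n k k m F"
  shows "mvpoly n k (\<lambda>y X. Hb b k m (F y X))"
proof (cases b)
  case (AM c1 c2 jj \<omega>)
  have aa: "i < k \<Longrightarrow> mvpoly n k (\<lambda>y X. aaf m (F y X) i)" for i
    unfolding aaf_def by (intro mvpoly_sum mvpoly_mult pmat_entry[OF F]) auto
  have bb: "i < k \<Longrightarrow> mvpoly n k (\<lambda>y X. bbf m (F y X) i)" for i
    unfolding bbf_def by (intro mvpoly_sum mvpoly_power pmat_entry[OF F]) auto
  have qq: "i < k \<Longrightarrow> mvpoly n k (\<lambda>y X. qqf m (F y X) i)" for i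
    unfolding qqf_def by (intro mvpoly_diff aa bb)
  have tt: "i < k \<Longrightarrow> mvpoly n k (\<lambda>y X. ttf m (F y X) i)" for i
    unfolding ttf_def by (intro mvpoly_sum mvpoly_power mvpoly_diff mvpoly_mult aa bb pmat_entry[OF F]) auto
  have "mvpoly n k (\<lambda>y X. AMP k m jj (F y X))"
    unfolding AMP_def by (intro mvpoly_prod mvpoly_mult mvpoly_if mvpoly_add mvpoly_const aa bb qq) auto
  moreover have "mvpoly n k (\<lambda>y X. AMD k m \<omega> (F y X))"
    unfolding AMD_def by (intro mvpoly_sum mvpoly_prod mvpoly_mult mvpoly_power mvpoly_const tt qq) auto
  ultimately show ?thesis unfolding AM Hb_def by (simp add: mvpoly_mult)
next
  case (NW \<omega> w c1 c2 c3)
  have "mvpoly n k (\<lambda>y X. NWH k m \<omega> w (F y X))"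
    unfolding NWH_def
    by (intro mvpoly_sum mvpoly_mult mvpoly_const mvpoly_divc pmat_entry[OF F]) auto
  then show ?thesis unfolding NW Hb_def by simp
next
  case (KV M)
  show ?thesis unfolding KV Hb_def by (simp add: mvpoly_const)
qed

lemma NW_iff:
  assumes Z: "Z \<in> carrier_mat k m" and w: "\<omega> \<in> carrier_vec k"
  shows "NWden \<omega> w Z = NWH k m \<omega> w Z"
proof -
  have "\<omega> \<bullet> (Gam Z s *\<^sub>v \<omega>) = (\<Sum>x<k. \<omega> $ x * (\<Sum>y<k.
      ((\<Sum>j\<in>{s..<m}. Z $$ (x, j) * Z $$ (y, j - s)) / real m) * \<omega> $ y))" for s
    using Z w by (auto simp: scalar_prod_def Gam_def atLeast0LessThan intro!: sum.cong)
  then show ?thesis unfolding NWden_def NWH_def using Z by simp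
qed

lemma prod_remove_div:
  fixes q :: "nat \<Rightarrow> real"
  assumes i: "i < k" and q: "\<forall>l<k. q l \<noteq> 0"
  shows "x / q i = x * (\<Prod>l\<in>{..<k} - {i}. q l) / (\<Prod>l<k. q l)"
proof -
  have "(\<Prod>l<k. q l) = q i * (\<Prod>l\<in>{..<k} - {i}. q l)"
    using i by (simp add: prod.remove)
  moreover have "(\<Prod>l\<in>{..<k} - {i}. q l) \<noteq> 0" using q by (auto simp: prod_zero_iff)
  ultimately show ?thesis using q i by (simp add: field_simps)
qed

lemma alg_aux:
  fixes b q r w t :: real
  assumes "b \<noteq> 0" "q \<noteq> 0" "r \<noteq> 0"
  shows "w * (t / (b\<^sup>2 * r))\<^sup>2 / (q / b) ^ 4 = w * t\<^sup>2 / q ^ 4 / r\<^sup>2"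
  using assms by (simp add: field_simps power2_eq_square eval_nat_numeral)

lemma AM_iff:
  assumes Z: "Z \<in> carrier_mat k m" and m: "m \<ge> 2"
  shows "(AMcond jj Z \<and> AMden \<omega> Z \<noteq> 0) \<longleftrightarrow> AMP k m jj Z * AMD k m \<omega> Z \<noteq> 0"
proof -
  have rho: "rho_hat Z i = aaf m Z i / bbf m Z i" for i
    unfolding rho_hat_def aaf_def bbf_def using Z by simp
  have cond: "AMcond jj Z \<longleftrightarrow> (\<forall>i<k. bbf m Z i \<noteq> 0 \<and> qqf m Z i \<noteq> 0 \<and> (jj = 1 \<longrightarrow> bbf m Z i + aaf m Z i \<noteq> 0))"
  proof -
    have "(aaf m Z i / bbf m Z i \<noteq> 1 \<longleftrightarrow> qqf m Z i \<noteq> 0) \<and> (aaf m Z i / bbf m Z i \<noteq> -1 \<longleftrightarrow> bbf m Z i + aaf m Z i \<noteq> 0)"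
      if "bbf m Z i \<noteq> 0" for i
      using that unfolding qqf_def by (auto simp: field_simps)
    moreover have "(\<Sum>l<dim_col Z - 1. (Z $$ (i, l))\<^sup>2) = bbf m Z i" for i
      unfolding bbf_def using Z by simp
    ultimately show ?thesis unfolding AMcond_def rho using Z by auto
  qed
  have P: "AMP k m jj Z \<noteq> 0 \<longleftrightarrow> AMcond jj Z"
    unfolding cond AMP_def by (auto simp: prod_zero_iff)
  have D: "AMden \<omega> Z \<noteq> 0 \<longleftrightarrow> AMD k m \<omega> Z \<noteq> 0" if c: "AMcond jj Z"
  proof -
    have b: "\<forall>i<k. bbf m Z i \<noteq> 0" and q: "\<forall>i<k. qqf m Z i \<noteq> 0" using c unfolding cond by auto
    have q4: "\<forall>i<k. qqf m Z i ^ 4 \<noteq> 0" using q by auto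
    have m1: "real (m - 1) \<noteq> 0" using m by simp
    have sig: "sigma2_hat Z i = ttf m Z i / ((bbf m Z i)\<^sup>2 * real (m - 1))" if i: "i < k" for i
    proof -
      have bi: "bbf m Z i \<noteq> 0" using b i by auto
      have "(\<Sum>j\<in>{1..<m}. (Z $$ (i, j) - aaf m Z i / bbf m Z i * Z $$ (i, j - 1))\<^sup>2)
        = (\<Sum>j\<in>{1..<m}. (bbf m Z i * Z $$ (i, j) - aaf m Z i * Z $$ (i, j - 1))\<^sup>2 / (bbf m Z i)\<^sup>2)"
        using bi by (intro sum.cong) (auto simp: field_simps power2_eq_square)
      then show ?thesis unfolding sigma2_hat_def rho ttf_def using Z bi m1
        by (simp add: sum_divide_distrib[symmetric] field_simps)
    qed
    have tm: "\<omega> $ i * (sigma2_hat Z i)\<^sup>2 / (1 - rho_hat Z i) ^ 4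
       = \<omega> $ i * (ttf m Z i)\<^sup>2 / (qqf m Z i ^ 4) / (real (m - 1))\<^sup>2" if i: "i < k" for i
    proof -
      have bi: "bbf m Z i \<noteq> 0" and qi: "qqf m Z i \<noteq> 0" using b q i by auto
      have e: "1 - rho_hat Z i = qqf m Z i / bbf m Z i" unfolding rho qqf_def using bi by (simp add: field_simps)
      show ?thesis unfolding sig[OF i] e using alg_aux[OF bi qi m1] .
    qed
    have s1: "AMden \<omega> Z = (\<Sum>i<k. \<omega> $ i * (ttf m Z i)\<^sup>2 / (qqf m Z i ^ 4)) / (real (m - 1))\<^sup>2"
      unfolding AMden_def sum_divide_distrib using Z tm by (auto intro!: sum.cong)
    have s2: "(\<Sum>i<k. \<omega> $ i * (ttf m Z i)\<^sup>2 / (qqf m Z i ^ 4))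
       = (\<Sum>i<k. \<omega> $ i * (ttf m Z i)\<^sup>2 * (\<Prod>l\<in>{..<k} - {i}. qqf m Z l ^ 4) / (\<Prod>l<k. qqf m Z l ^ 4))"
    proof (rule sum.cong[OF refl])
      fix i assume "i \<in> {..<k}"
      then show "\<omega> $ i * (ttf m Z i)\<^sup>2 / (qqf m Z i ^ 4)
       = \<omega> $ i * (ttf m Z i)\<^sup>2 * (\<Prod>l\<in>{..<k} - {i}. qqf m Z l ^ 4) / (\<Prod>l<k. qqf m Z l ^ 4)"
        using prod_remove_div[of i k "\<lambda>l. qqf m Z l ^ 4" "\<omega> $ i * (ttf m Z i)\<^sup>2"] q4 by simp
    qed
    have s3: "(\<Sum>i<k. \<omega> $ i * (ttf m Z i)\<^sup>2 * (\<Prod>l\<in>{..<k} - {i}. qqf m Z l ^ 4) / (\<Prod>l<k. qqf m Z l ^ 4))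
       = AMD k m \<omega> Z / (\<Prod>l<k. qqf m Z l ^ 4)"
      unfolding AMD_def sum_divide_distrib ..
    have eq: "AMden \<omega> Z = AMD k m \<omega> Z / (\<Prod>l<k. qqf m Z l ^ 4) / (real (m - 1))\<^sup>2"
      unfolding s1 s2 s3 ..
    have "(\<Prod>l<k. qqf m Z l ^ 4) \<noteq> 0" using q4 by (auto simp: prod_zero_iff)
    then show ?thesis unfolding eq using m1 by simp
  qed
  show ?thesis using P D by auto
qed

lemma bw_iff:
  assumes Z: "Z \<in> carrier_mat k m" and m: "m \<ge> 2" and ok: "bandwidth_ok N k p b"
  shows "bandwidth_val b N Z = None \<longleftrightarrow> Hb b k m Z = 0"
proof (cases b)
  case (AM c1 c2 jj \<omega>)
  show ?thesis unfolding AM bw_AM_None Hb_def using AM_iff[OF Z m, of jj \<omega>] by simp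
next
  case (NW \<omega> w c1 c2 c3)
  then have "\<omega> \<in> carrier_vec k" using ok unfolding bandwidth_ok_def weights_vector_def by auto
  then show ?thesis unfolding NW bw_NW_None Hb_def using NW_iff[OF Z] by simp
next
  case (KV M)
  show ?thesis unfolding KV Hb_def using bw_KV_None[of M N Z] by simp
qed



lemma pmat_V_p: assumes F: "pmat n k r N F"
  shows "pmat n k r (N - p) (\<lambda>y X. V_p p (F y X))"
proof (rule pmat_ext)
  show "pmat n k r (N - p) (\<lambda>y X. mat r (N - p) (\<lambda>(i, j). F y X $$ (i, j + p)))"
    by (rule pmat_mat, rule pmat_entry[OF F]) auto
next
  fix y X show "V_p p (F y X) = mat r (N - p) (\<lambda>(i, j). F y X $$ (i, j + p))"
    unfolding V_p_def using pmat_carrier[OF F, of y X] by auto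
qed

lemma pmat_V_1: assumes F: "pmat n k r N F"
  shows "pmat n k (r * p) (N - p) (\<lambda>y X. V_1 p (F y X))"
proof (rule pmat_ext)
  show "pmat n k (r * p) (N - p) (\<lambda>y X. mat (r * p) (N - p) (\<lambda>(i, j). F y X $$ (i mod r, j + p - 1 - i div r)))"
  proof (rule pmat_mat, rule pmat_entry[OF F])
    fix i j assume ij: "i < r * p" "j < N - p"
    then have "r > 0" by (cases r) auto
    then show "i mod r < r" by simp
    show "j + p - 1 - i div r < N" using ij by auto
  qed
next
  fix y X show "V_1 p (F y X) = mat (r * p) (N - p) (\<lambda>(i, j). F y X $$ (i mod r, j + p - 1 - i div r))"
    unfolding V_1_def using pmat_carrier[OF F, of y X] by auto
qed

lemma pmat_A_sum: assumes F: "pmat n k r (r * p) F"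
  shows "pmat n k r r (\<lambda>y X. A_sum r p (F y X))"
proof (rule pmat_ext)
  show "pmat n k r r (\<lambda>y X. mat r r (\<lambda>(i, j). \<Sum>l<p. F y X $$ (i, l * r + j)))"
  proof (rule pmat_mat, rule mvpoly_sum, rule pmat_entry[OF F])
    fix i j l assume ij: "i < r" "j < r" and l: "l \<in> {..<p}"
    show "i < r" by fact
    have "l * r + j < l * r + r" using ij by simp
    also have "\<dots> = (l + 1) * r" by simp
    also have "\<dots> \<le> p * r" using l by (intro mult_right_mono) auto
    finally show "l * r + j < r * p" by (simp add: mult.commute)
  qed
next
  fix y X show "A_sum r p (F y X) = mat r r (\<lambda>(i, j). \<Sum>l<p. F y X $$ (i, l * r + j))"
    unfolding A_sum_def ..
qed

definition Wf :: "nat \<Rightarrow> nat \<Rightarrow> real vec \<Rightarrow> real mat \<Rightarrow> real mat" where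
  "Wf n k y X = Wm n (Xn n k X) (yc n y)"

definition gpoly :: "nat \<Rightarrow> nat \<Rightarrow> nat \<Rightarrow> bandwidth \<Rightarrow> real vec \<Rightarrow> real mat \<Rightarrow> real" where
  "gpoly n k p b y X = d1f p (Wf n k y X) * d2f k p (Wf n k y X) * Hb b k (n - p) (ZPf p (Wf n k y X))"

lemma gpoly_mvpoly: "mvpoly n k (gpoly n k p b)"
proof -
  have W: "pmat n k k n (\<lambda>y X. Wf n k y X)" unfolding Wf_def by (rule pmat_Wm)
  have W1: "pmat n k (k * p) (n - p) (\<lambda>y X. V_1 p (Wf n k y X))" by (rule pmat_V_1[OF W])
  have Wq: "pmat n k k (n - p) (\<lambda>y X. V_p p (Wf n k y X))" by (rule pmat_V_p[OF W])
  have G: "pmat n k (k * p) (k * p) (\<lambda>y X. V_1 p (Wf n k y X) * transpose_mat (V_1 p (Wf n k y X)))"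
    by (rule pmat_mult[OF W1 pmat_transpose[OF W1]])
  have d1: "mvpoly n k (\<lambda>y X. d1f p (Wf n k y X))" unfolding d1f_def by (rule mvpoly_det[OF G])
  have A: "pmat n k k (k * p) (\<lambda>y X. Aadj p (Wf n k y X))" unfolding Aadj_def
    by (rule pmat_mult[OF pmat_mult[OF Wq pmat_transpose[OF W1]] pmat_adj[OF G]])
  have d2: "mvpoly n k (\<lambda>y X. d2f k p (Wf n k y X))" unfolding d2f_def
    by (rule mvpoly_det[OF pmat_minus[OF pmat_smult[OF d1 pmat_one] pmat_A_sum[OF A]]])
  have Z: "pmat n k k (n - p) (\<lambda>y X. ZPf p (Wf n k y X))" unfolding ZPf_def
    by (rule pmat_minus[OF pmat_smult[OF d1 Wq] pmat_mult[OF A W1]])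
  have "mvpoly n k (\<lambda>y X. d1f p (Wf n k y X) * d2f k p (Wf n k y X) * Hb b k (n - p) (ZPf p (Wf n k y X)))"
    by (rule mvpoly_mult[OF mvpoly_mult[OF d1 d2] bw_poly[OF Z]])
  then show ?thesis unfolding gpoly_def by simp
qed

lemma Omega_None: "Omega_hat \<kappa> b p X R y = None \<longleftrightarrow>
   (A_hat p (V_hat X y) = None \<or> (\<exists>A. A_hat p (V_hat X y) = Some A \<and>
      (mat_inverse (1\<^sub>m (dim_col X) - A_sum (dim_col X) p A) = None \<or>
       bandwidth_val b (dim_row X) (V_p p (V_hat X y) - A * V_1 p (V_hat X y)) = None)))"
  unfolding Omega_hat_def Let_def by (auto split: option.split)

lemma main_iff:
  assumes X: "X \<in> carrier_mat n k" and r: "vec_space.rank n X = k" and y: "y \<in> carrier_vec n"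
    and m: "n - p \<ge> 2" and ok: "bandwidth_ok n k p b"
  shows "Omega_hat \<kappa> b p X R y = None \<longleftrightarrow> gpoly n k p b y X = 0"
proof -
  define c where "c = det (transpose_mat X * X)"
  have c: "c \<noteq> 0" unfolding c_def using design_det[OF X r] .
  define W where "W = Wf n k y X"
  have WW: "W = Wm n X (yc n y)" unfolding W_def Wf_def Xn_id[OF X] ..
  have Wc: "W \<in> carrier_mat k n" unfolding WW Wm_def using X by auto
  have V: "V_hat X y = (1 / c) \<cdot>\<^sub>m W" unfolding WW c_def by (rule V_hat_W[OF X y c[unfolded c_def]])
  have dims: "dim_row X = n" "dim_col X = k" using X by auto
  show ?thesis
  proof (cases "d1f p W = 0")
    case True
    then show ?thesis unfolding Omega_None V A_hat_rel[OF Wc c] gpoly_def W_def[symmetric] by simp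
  next
    case False
    define d where "d = d1f p W"
    have d: "d \<noteq> 0" using False d_def by simp
    have Ah: "A_hat p (V_hat X y) = Some ((1 / d) \<cdot>\<^sub>m Aadj p W)"
      unfolding V A_hat_rel[OF Wc c] d_def using False by simp
    have inv: "mat_inverse (1\<^sub>m k - A_sum k p ((1 / d) \<cdot>\<^sub>m Aadj p W)) = None \<longleftrightarrow> d2f k p W = 0"
      unfolding d2f_def d_def[symmetric] by (rule inv_rel[OF Aadj_carrier[OF Wc] d])
    have Zeq: "V_p p (V_hat X y) - ((1 / d) \<cdot>\<^sub>m Aadj p W) * V_1 p (V_hat X y) = (1 / (c * d)) \<cdot>\<^sub>m ZPf p W"
      unfolding V d_def by (rule Z_rel[OF Wc c False])
    have ZPc: "ZPf p W \<in> carrier_mat k (n - p)"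
      unfolding ZPf_def using V_p_carrier[OF Wc, of p] V_1_carrier[OF Wc, of p] Aadj_carrier[OF Wc, of p]
      by auto
    have cd: "1 / (c * d) \<noteq> 0" using c d by simp
    have ok': "bandwidth_ok n (dim_row (ZPf p W)) p b" using ok ZPc by simp
    have bw: "bandwidth_val b n ((1 / (c * d)) \<cdot>\<^sub>m ZPf p W) = None \<longleftrightarrow> Hb b k (n - p) (ZPf p W) = 0"
      unfolding bw_scale[OF cd ok'] by (rule bw_iff[OF ZPc m ok])
    show ?thesis unfolding Omega_None Ah dims Zeq gpoly_def W_def[symmetric] d_def[symmetric]
      using inv bw d Zeq by auto
  qed
qed


theorem lemma3p1:
  fixes n k p :: nat and \<kappa> :: "real \<Rightarrow> real" and b :: bandwidth
  assumes "n > 2" and "1 \<le> k" and "k < n"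
    and "assumption_A n k \<kappa> b p"
  shows "\<exists>g. mvpoly n k g \<and>
           (\<forall>X \<in> design_set n k. \<forall>q::nat. \<forall>R \<in> carrier_mat q k. \<forall>r :: real vec \<in> carrier_vec q.
              q \<ge> 1 \<longrightarrow> vec_space.rank q R = q \<longrightarrow>
              N_set \<kappa> b p X R = {y \<in> carrier_vec n. g y X = 0})"
proof (intro exI conjI ballI allI impI)
  show "mvpoly n k (gpoly n k p b)" by (rule gpoly_mvpoly)
  have ok: "bandwidth_ok n k p b" and p1: "1 \<le> p" and pn: "real p \<le> real n / real (k + 1)"
    using assms(4) unfolding assumption_A_def by auto
  have "real p * real (k + 1) \<le> real n" using pn by (simp add: field_simps)
  moreover have "real p * 2 \<le> real p * real (k + 1)" using assms(2) by (intro mult_left_mono) auto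
  ultimately have "real (2 * p) \<le> real n" by simp
  then have "2 * p \<le> n" by linarith
  then have m: "n - p \<ge> 2" using assms(1) by linarith
  fix X q R r
  assume X: "X \<in> design_set n k"
  then have Xc: "X \<in> carrier_mat n k" and rk: "vec_space.rank n X = k" unfolding design_set_def by auto
  show "N_set \<kappa> b p X R = {y \<in> carrier_vec n. gpoly n k p b y X = 0}"
    unfolding N_set_def using main_iff[OF Xc rk _ m ok, of _ \<kappa> R] Xc by auto
qed

end
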